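(* Let $\mathcal{G}$ be a finite tree and let $(v_0,v_1,\dots,v_N)$ be the unique path from $v_0$ to $v_N$, $N\ge 1$. Then the access times of the begrudgingly backtracking random walk satisfy $$\tilde{\mathtt{t}}(v_0,v_N)=\tilde{\mathtt{t}}(v_0,v_1)+\sum_{n=1}^{N-1}\Bigl(\tilde{\mathtt{t}}(v_{n-1}\to v_n,v_{n+1})-1\Bigr).$$
   Context: Begrudgingly backtracking random walk (BBRW): $x_1$ is uniform on the neighbors of $x_0$; for $n\ge0$, given $x_n=i,x_{n+1}=j$, $x_{n+2}$ is uniform on $\mathcal{N}(j)\setminus\{i\}$ if this set is nonempty, and $x_{n+2}=i$ otherwise. For a node $k$, $T_k=\min\{n\ge0:x_n=k\}$. Access times of BBRW: $\tilde{\mathtt{t}}(i,k)=\mathbb{E}[T_k\mid x_0=i]$ and $\tilde{\mathtt{t}}(i\to j,k)=\mathbb{E}[T_k\mid x_0=i,\ x_1=j]$ for $j$ adjacent to $i$. *)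

theory Defs
  imports "HOL-Analysis.Analysis" "HOL-Library.Extended_Nonnegative_Real"
begin

definition nbrs :: "('a \<Rightarrow> 'a \<Rightarrow> bool) \<Rightarrow> 'a \<Rightarrow> 'a set" where
  "nbrs E v = {u. E v u}"

definition is_walk :: "('a \<Rightarrow> 'a \<Rightarrow> bool) \<Rightarrow> 'a list \<Rightarrow> bool" where
  "is_walk E xs \<longleftrightarrow> (\<forall>i. Suc i < length xs \<longrightarrow> E (xs ! i) (xs ! Suc i))"

definition is_cycle :: "('a \<Rightarrow> 'a \<Rightarrow> bool) \<Rightarrow> 'a list \<Rightarrow> bool" where
  "is_cycle E xs \<longleftrightarrow> length xs \<ge> 4 \<and> is_walk E xs \<and> hd xs = last xs \<and> distinct (butlast xs)"

definition finite_tree :: "'a set \<Rightarrow> ('a \<Rightarrow> 'a \<Rightarrow> bool) \<Rightarrow> bool" where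
  "finite_tree V E \<longleftrightarrow> finite V \<and> V \<noteq> {}
     \<and> (\<forall>u v. E u v \<longrightarrow> u \<in> V \<and> v \<in> V)
     \<and> (\<forall>u v. E u v \<longrightarrow> E v u)
     \<and> (\<forall>u. \<not> E u u)
     \<and> (\<forall>u\<in>V. \<forall>v\<in>V. E\<^sup>*\<^sup>* u v)
     \<and> (\<nexists>xs. is_cycle E xs)"

definition step_prob :: "('a \<Rightarrow> 'a \<Rightarrow> bool) \<Rightarrow> 'a \<Rightarrow> 'a \<Rightarrow> 'a \<Rightarrow> real" where
  "step_prob E i j k = (let S = nbrs E j - {i} in
     if S \<noteq> {} then (if k \<in> S then 1 / real (card S) else 0)
     else (if k = i then 1 else 0))"

text \<open>Probability weight of the trajectory x0,x1,...,xn given x0 and x1 (product of steps from time 2 on).\<close>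
fun traj_weight :: "('a \<Rightarrow> 'a \<Rightarrow> bool) \<Rightarrow> 'a list \<Rightarrow> real" where
  "traj_weight E (x # y # z # rest) = step_prob E x y z * traj_weight E (y # z # rest)"
| "traj_weight E _ = 1"

definition bbrw_prob :: "('a \<Rightarrow> 'a \<Rightarrow> bool) \<Rightarrow> 'a list \<Rightarrow> real" where
  "bbrw_prob E xs = (case xs of
      x # y # _ \<Rightarrow> (if E x y then 1 / real (card (nbrs E x)) else 0) * traj_weight E xs
    | _ \<Rightarrow> 1)"

text \<open>P(T_k > n | x0 = i)\<close>
definition surv :: "'a set \<Rightarrow> ('a \<Rightarrow> 'a \<Rightarrow> bool) \<Rightarrow> 'a \<Rightarrow> 'a \<Rightarrow> nat \<Rightarrow> real" where
  "surv V E i k n = (\<Sum>xs\<in>{xs. length xs = Suc n \<and> set xs \<subseteq> V \<and> hd xs = i \<and> k \<notin> set xs}.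
       bbrw_prob E xs)"

text \<open>P(T_k > n | x0 = i, x1 = j)\<close>
definition surv_edge :: "'a set \<Rightarrow> ('a \<Rightarrow> 'a \<Rightarrow> bool) \<Rightarrow> 'a \<Rightarrow> 'a \<Rightarrow> 'a \<Rightarrow> nat \<Rightarrow> real" where
  "surv_edge V E i j k n = (\<Sum>xs\<in>{xs. length xs = Suc n \<and> set xs \<subseteq> V \<and> hd xs = i
        \<and> (2 \<le> length xs \<longrightarrow> xs ! 1 = j) \<and> k \<notin> set xs}.
       traj_weight E xs)"

text \<open>Access times E[T_k | x0 = i] = sum_n P(T_k > n) (valued in [0,\<infinity>]).\<close>
definition access_time :: "'a set \<Rightarrow> ('a \<Rightarrow> 'a \<Rightarrow> bool) \<Rightarrow> 'a \<Rightarrow> 'a \<Rightarrow> ennreal" where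
  "access_time V E i k = (\<Sum>n. ennreal (surv V E i k n))"

definition access_time_edge :: "'a set \<Rightarrow> ('a \<Rightarrow> 'a \<Rightarrow> bool) \<Rightarrow> 'a \<Rightarrow> 'a \<Rightarrow> 'a \<Rightarrow> ennreal" where
  "access_time_edge V E i j k = (\<Sum>n. ennreal (surv_edge V E i j k n))"

end

theory Submission
  imports Defs
begin


lemma is_walk_Nil[simp]: "is_walk E []" and is_walk_single[simp]: "is_walk E [x]"
  by (auto simp: is_walk_def)

lemma is_walk_Cons2[simp]: "is_walk E (x # y # zs) \<longleftrightarrow> E x y \<and> is_walk E (y # zs)"
  unfolding is_walk_def
  apply (auto simp: less_Suc_eq_0_disj)
  done

lemma is_walk_append:
  "is_walk E (xs @ ys) \<longleftrightarrow> is_walk E xs \<and> is_walk E ys \<and> (xs \<noteq> [] \<and> ys \<noteq> [] \<longrightarrow> E (last xs) (hd ys))"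
proof (induction xs rule: induct_list012)
  case 1 then show ?case by simp
next
  case (2 x) then show ?case by (cases ys) auto
next
  case (3 x y zs) then show ?case by auto
qed

lemma is_walk_Cons: "is_walk E (x # xs) \<longleftrightarrow> is_walk E xs \<and> (xs \<noteq> [] \<longrightarrow> E x (hd xs))"
  by (cases xs) auto

lemma is_walk_rev:
  assumes sym: "\<And>u v. E u v \<Longrightarrow> E v u"
  shows "is_walk E xs \<Longrightarrow> is_walk E (rev xs)"
proof (induction xs)
  case Nil then show ?case by simp
next
  case (Cons x xs) then show ?case
    by (auto simp: is_walk_Cons is_walk_append last_rev intro: sym)
qed

lemma is_walk_take: "is_walk E xs \<Longrightarrow> is_walk E (take k xs)"
  by (metis append_take_drop_id is_walk_append)

lemma walk_to_path:
  assumes "is_walk E q" "q \<noteq> []"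
  shows "\<exists>q'. distinct q' \<and> is_walk E q' \<and> q' \<noteq> [] \<and> hd q' = hd q \<and> last q' = last q \<and> set q' \<subseteq> set q"
  using assms
proof (induction "length q" arbitrary: q rule: less_induct)
  case less
  show ?case
  proof (cases "distinct q")
    case True then show ?thesis using less by blast
  next
    case False
    then obtain xs y ys zs where q: "q = xs @ [y] @ ys @ [y] @ zs"
      using not_distinct_decomp by blast
    define r where "r = xs @ [y] @ zs"
    have w: "is_walk E (xs @ [y] @ ys @ [y] @ zs)" using less(2) q by simp
    have w1: "is_walk E (xs @ [y])" using w is_walk_append[of E "xs @ [y]" "ys @ [y] @ zs"] by simp
    have w2: "is_walk E (y # zs)" using w is_walk_append[of E "xs @ [y] @ ys" "y # zs"] by simp
    have "is_walk E r" using w1 w2 is_walk_append[of E "xs @ [y]" "zs"] unfolding r_def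
      by (cases zs) (auto simp: is_walk_Cons)
    moreover have "length r < length q" unfolding q r_def by simp
    moreover have "r \<noteq> []" unfolding r_def by simp
    ultimately obtain q' where q': "distinct q' \<and> is_walk E q' \<and> q' \<noteq> [] \<and> hd q' = hd r \<and> last q' = last r \<and> set q' \<subseteq> set r"
      using less(1) by blast
    moreover have "hd r = hd q" "last r = last q" "set r \<subseteq> set q"
      unfolding r_def q by (cases xs; auto)+
    ultimately show ?thesis apply (intro exI[of _ q']) by auto
  qed
qed

lemma unique_path:
  assumes sym: "\<And>u v. E u v \<Longrightarrow> E v u"
    and acyc: "\<nexists>xs. is_cycle E xs"
  shows "distinct p \<Longrightarrow> is_walk E p \<Longrightarrow> p \<noteq> [] \<Longrightarrow> distinct q \<Longrightarrow> is_walk E q \<Longrightarrow> q \<noteq> []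
    \<Longrightarrow> hd p = hd q \<Longrightarrow> last p = last q \<Longrightarrow> p = q"
proof (induction p arbitrary: q)
  case Nil then show ?case by simp
next
  case (Cons u p')
  obtain q' where q: "q = u # q'" using Cons.prems by (cases q) auto
  show ?case
  proof (cases "p' = [] \<or> q' = []")
    case True
    then show ?thesis using Cons.prems q
      by (auto dest!: last_in_set) (metis last_in_set)+
  next
    case False
    then obtain x p'' y q'' where p': "p' = x # p''" and q': "q' = y # q''"
      by (meson list.exhaust)
    show ?thesis
    proof (cases "x = y")
      case True
      have "p' = q'"
        apply (rule Cons.IH)
        using Cons.prems q False True p' q' by (auto simp: is_walk_Cons)
      then show ?thesis using q by simp
    next
      case False
      have "last p' \<in> set q'" using Cons.prems q \<open>\<not> (p' = [] \<or> q' = [])\<close> by auto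
      then obtain p1 z p2 where ps: "p' = p1 @ z # p2" "z \<in> set q'" "\<forall>w\<in>set p1. w \<notin> set q'"
        using split_list_first_prop[of p' "\<lambda>w. w \<in> set q'"] by (metis last_in_set \<open>\<not> (p' = [] \<or> q' = [])\<close>)
      obtain q1 q2 where qs: "q' = q1 @ z # q2" using ps(2) split_list by metis
      define C where "C = (u # p1) @ rev (u # q1 @ [z])"
      have w1: "is_walk E (u # p1 @ [z])"
        using Cons.prems(2) unfolding ps(1) by (metis append_Cons append_assoc append_Cons append_Nil is_walk_append)
      have w2: "is_walk E (u # q1 @ [z])"
        using Cons.prems(5) unfolding q qs by (metis append_Cons append_assoc append_Cons append_Nil is_walk_append)
      have w1': "is_walk E (u # p1)" "E (last (u # p1)) z"
        using w1 is_walk_append[of E "u # p1" "[z]"] by auto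
      have "is_walk E C" unfolding C_def
        using w1' is_walk_rev[OF sym w2] is_walk_append[of E "u # p1" "rev (u # q1 @ [z])"] by simp
      moreover have "length C \<ge> 4"
      proof -
        have "p1 \<noteq> [] \<or> q1 \<noteq> []" using False p' q' ps qs by auto
        then have "length p1 + length q1 \<ge> 1" by (cases p1; cases q1) auto
        then show ?thesis unfolding C_def by simp
      qed
      moreover have "hd C = last C" unfolding C_def by simp
      moreover have "distinct (butlast C)"
        using Cons.prems(1,4) ps qs q unfolding C_def by (auto simp: butlast_append)
      ultimately show ?thesis using acyc unfolding is_cycle_def by blast
    qed
  qed
qed

lemma path_in_walk:
  assumes sym: "\<And>u v. E u v \<Longrightarrow> E v u"
    and acyc: "\<nexists>xs. is_cycle E xs"
    and p: "distinct p" "is_walk E p" "p \<noteq> []"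
    and q: "is_walk E q" "q \<noteq> []" "hd p = hd q" "last p \<in> set q"
  shows "set p \<subseteq> set q"
proof -
  obtain j where j: "j < length q" "q ! j = last p" using q(4) by (metis in_set_conv_nth)
  define r where "r = take (Suc j) q"
  have r_eq: "r = take j q @ [q ! j]" by (simp add: r_def take_Suc_conv_app_nth j)
  have r1: "is_walk E r" unfolding r_def using is_walk_take q(1) by blast
  have r2: "r \<noteq> []" "hd r = hd p" using q(2,3) unfolding r_def by (cases q; simp)+
  have r3: "last r = last p" "set r \<subseteq> set q" using j unfolding r_eq
    by (auto simp: r_def set_take_subset dest: in_set_takeD) (metis nth_mem)
  note r = r1 r2 r3
  then obtain r' where "distinct r' \<and> is_walk E r' \<and> r' \<noteq> [] \<and> hd r' = hd r \<and> last r' = last r \<and> set r' \<subseteq> set r"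
    using walk_to_path by metis
  moreover then have "p = r'" using unique_path[OF sym acyc] p r by auto
  ultimately show ?thesis using r by auto
qed




lemma step_prob_nonneg: "step_prob E x y z \<ge> 0"
  by (simp add: step_prob_def Let_def)

lemma traj_weight_nonneg: "traj_weight E xs \<ge> 0"
  by (induction E xs rule: traj_weight.induct) (auto intro!: mult_nonneg_nonneg step_prob_nonneg)

lemma bbrw_prob_nonneg: "bbrw_prob E xs \<ge> 0"
  by (auto simp: bbrw_prob_def split: list.splits intro!: divide_nonneg_nonneg traj_weight_nonneg)

lemma traj_weight_Cons:
  "length ys \<ge> 2 \<Longrightarrow> traj_weight E (a # ys) = step_prob E a (ys!0) (ys!1) * traj_weight E ys"
  by (cases ys rule: remdups_adj.cases) auto

lemma traj_weight_split:
  "traj_weight E (xs @ x # y # rest) = traj_weight E (xs @ [x, y]) * traj_weight E (x # y # rest)"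
proof (induction xs)
  case Nil then show ?case by simp
next
  case (Cons a xs)
  have "traj_weight E (a # (xs @ x # y # rest)) = step_prob E a ((xs @ x # y # rest)!0) ((xs @ x # y # rest)!1) * traj_weight E (xs @ x # y # rest)"
    by (rule traj_weight_Cons) simp
  moreover have "traj_weight E (a # (xs @ [x, y])) = step_prob E a ((xs @ [x, y])!0) ((xs @ [x, y])!1) * traj_weight E (xs @ [x, y])"
    by (rule traj_weight_Cons) simp
  moreover have "(xs @ x # y # rest)!0 = (xs @ [x, y])!0" "(xs @ x # y # rest)!1 = (xs @ [x, y])!1"
    by (cases xs rule: remdups_adj.cases; simp)+
  ultimately show ?case using Cons by simp
qed

lemma bbrw_prob_eq:
  "length xs \<ge> 2 \<Longrightarrow> bbrw_prob E xs = (if E (xs!0) (xs!1) then 1 / real (card (nbrs E (xs!0))) else 0) * traj_weight E xs"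
  by (cases xs rule: remdups_adj.cases) (auto simp: bbrw_prob_def)

lemma bbrw_split:
  assumes "pre \<noteq> []"
  shows "bbrw_prob E (pre @ y # rest) = bbrw_prob E (pre @ [y]) * traj_weight E (last pre # y # rest)"
proof -
  obtain ys x where pre: "pre = ys @ [x]" using assms by (metis append_butlast_last_id)
  have i0: "(pre @ y # rest)!0 = (pre @ [y])!0" "(pre @ y # rest)!1 = (pre @ [y])!1"
    unfolding pre by (cases ys rule: remdups_adj.cases; simp)+
  have "bbrw_prob E (pre @ y # rest) = (if E ((pre @ [y])!0) ((pre @ [y])!1) then 1 / real (card (nbrs E ((pre @ [y])!0))) else 0) * traj_weight E (pre @ y # rest)"
    using bbrw_prob_eq[of "pre @ y # rest" E] i0 assms by (cases pre) auto
  moreover have "bbrw_prob E (pre @ [y]) = (if E ((pre @ [y])!0) ((pre @ [y])!1) then 1 / real (card (nbrs E ((pre @ [y])!0))) else 0) * traj_weight E (pre @ [y])"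
    using bbrw_prob_eq[of "pre @ [y]" E] assms by (cases pre) auto
  moreover have "traj_weight E (pre @ y # rest) = traj_weight E (pre @ [y]) * traj_weight E (x # y # rest)"
    unfolding pre using traj_weight_split[of E ys x y rest] traj_weight_split[of E ys x y "[]"] by simp
  ultimately show ?thesis unfolding pre by simp
qed

lemma traj_walk:
  assumes sym: "\<And>u v. E u v \<Longrightarrow> E v u"
  shows "E x y \<Longrightarrow> traj_weight E (x # y # rest) \<noteq> 0 \<Longrightarrow> is_walk E (x # y # rest)"
proof (induction rest arbitrary: x y)
  case Nil then show ?case by simp
next
  case (Cons z rest)
  have st: "step_prob E x y z \<noteq> 0" and tw: "traj_weight E (y # z # rest) \<noteq> 0" using Cons.prems by auto
  have "E y z"
  proof (cases "nbrs E y - {x} = {}")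
    case True
    then have "z = x" using st unfolding step_prob_def Let_def by (auto split: if_splits)
    then show ?thesis using sym[OF Cons.prems(1)] by simp
  next
    case False
    then have "z \<in> nbrs E y - {x}" using st unfolding step_prob_def Let_def by (auto split: if_splits)
    then show ?thesis by (simp add: nbrs_def)
  qed
  then show ?case using Cons.IH[OF _ tw] Cons.prems by simp
qed

lemma bbrw_walk:
  assumes sym: "\<And>u v. E u v \<Longrightarrow> E v u"
  shows "bbrw_prob E xs \<noteq> 0 \<Longrightarrow> is_walk E xs"
proof (cases xs rule: remdups_adj.cases)
  case (3 x y rest)
  assume "bbrw_prob E xs \<noteq> 0"
  then have "E x y" "traj_weight E (x # y # rest) \<noteq> 0" unfolding 3 by (auto simp: bbrw_prob_def split: if_splits)
  then show ?thesis unfolding 3 using traj_walk[of E, OF sym] by blast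
qed auto

lemma step_sum:
  assumes "finite V" "x \<in> V" "nbrs E y \<subseteq> V"
  shows "(\<Sum>z\<in>V. step_prob E x y z) = 1"
proof (cases "nbrs E y - {x} = {}")
  case True
  then show ?thesis using assms by (simp add: step_prob_def Let_def sum.delta)
next
  case False
  let ?S = "nbrs E y - {x}"
  have fS: "finite ?S" using assms finite_subset by blast
  have "(\<Sum>z\<in>V. step_prob E x y z) = (\<Sum>z\<in>V. if z \<in> ?S then 1 / real (card ?S) else 0)"
    using False by (simp add: step_prob_def Let_def)
  also have "\<dots> = (\<Sum>z\<in>?S. 1 / real (card ?S))"
  proof -
    have "V \<inter> {xa \<in> nbrs E y. xa \<noteq> x} = ?S" using assms by auto
    then show ?thesis using assms by (subst sum.If_cases) auto
  qed
  also have "\<dots> = 1" using False fS by simp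
  finally show ?thesis .
qed

lemma bbrw_stoch:
  assumes finV: "finite V" and inV: "\<And>u v. E u v \<Longrightarrow> u \<in> V \<and> v \<in> V"
    and xs: "xs \<noteq> []" "set xs \<subseteq> V" and nb: "nbrs E (hd xs) \<noteq> {}"
  shows "(\<Sum>z\<in>V. bbrw_prob E (xs @ [z])) = bbrw_prob E xs"
proof (cases "length xs \<ge> 2")
  case False
  then obtain x where x: "xs = [x]" using xs by (cases xs rule: remdups_adj.cases) auto
  have sub: "nbrs E x \<subseteq> V" using inV by (auto simp: nbrs_def)
  have fin: "finite (nbrs E x)" using sub finV finite_subset by blast
  have "(\<Sum>z\<in>V. bbrw_prob E (xs @ [z])) = (\<Sum>z\<in>V. if z \<in> nbrs E x then 1 / real (card (nbrs E x)) else 0)"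
    unfolding x by (intro sum.cong) (auto simp: bbrw_prob_def nbrs_def)
  also have "\<dots> = (\<Sum>z\<in>nbrs E x. 1 / real (card (nbrs E x)))"
    using sub finV by (subst sum.If_cases) (auto simp: Int_absorb1)
  also have "\<dots> = 1" using nb fin x by simp
  finally show ?thesis using x by (simp add: bbrw_prob_def)
next
  case True
  obtain pre y where pre: "xs = pre @ [y]" using xs by (metis append_butlast_last_id)
  have "pre \<noteq> []" using True pre by auto
  have eq: "bbrw_prob E (xs @ [z]) = bbrw_prob E xs * step_prob E (last pre) y z" for z
  proof -
    have "bbrw_prob E (pre @ y # [z]) = bbrw_prob E (pre @ [y]) * traj_weight E (last pre # y # [z])"
      by (rule bbrw_split[OF \<open>pre \<noteq> []\<close>])
    then show ?thesis unfolding pre by simp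
  qed
  have "(\<Sum>z\<in>V. bbrw_prob E (xs @ [z])) = (\<Sum>z\<in>V. bbrw_prob E xs * step_prob E (last pre) y z)"
    by (rule sum.cong[OF refl eq])
  also have "\<dots> = bbrw_prob E xs * (\<Sum>z\<in>V. step_prob E (last pre) y z)"
    by (simp add: sum_distrib_left)
  also have "(\<Sum>z\<in>V. step_prob E (last pre) y z) = 1"
    using \<open>pre \<noteq> []\<close> xs pre inV finV by (intro step_sum) (auto simp: nbrs_def)
  finally show ?thesis by (simp only: mult_1_right)
qed




lemma takeWhile_split: "b \<notin> set p \<Longrightarrow> takeWhile (\<lambda>x. x \<noteq> b) (p @ b # q) = p"
  by (induction p) auto

locale bbrw_setup =
  fixes V :: "'a set" and E :: "'a \<Rightarrow> 'a \<Rightarrow> bool" and i a b c :: 'a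
  assumes finV: "finite V"
    and inV: "\<And>u v. E u v \<Longrightarrow> u \<in> V \<and> v \<in> V"
    and sym: "\<And>u v. E u v \<Longrightarrow> E v u"
    and iV: "i \<in> V" and Eab: "E a b" and cV: "c \<in> V"
    and nb: "nbrs E i \<noteq> {}"
    and ib: "i \<noteq> b" and ic: "i \<noteq> c" and bc: "b \<noteq> c" and ac: "a \<noteq> c"
    and G1: "\<And>q. is_walk E q \<Longrightarrow> q \<noteq> [] \<Longrightarrow> hd q = i \<Longrightarrow> b \<notin> set q \<Longrightarrow> c \<notin> set q"
    and G2: "\<And>q. is_walk E q \<Longrightarrow> q \<noteq> [] \<Longrightarrow> hd q = i \<Longrightarrow> b \<notin> set q \<Longrightarrow> E (last q) b \<Longrightarrow> last q = a"
begin

lemma aV: "a \<in> V" and bV: "b \<in> V" using inV[OF Eab] by auto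

definition SS :: "'a \<Rightarrow> 'a \<Rightarrow> nat \<Rightarrow> 'a list set" where
  "SS x k n = {xs. length xs = Suc n \<and> set xs \<subseteq> V \<and> hd xs = x \<and> k \<notin> set xs}"

lemma surv_SS: "surv V E x k n = sum (bbrw_prob E) (SS x k n)"
  by (simp add: surv_def SS_def)

lemma finite_lists_V: "finite {xs. set xs \<subseteq> V \<and> length xs = n}"
  using finite_lists_length_eq[OF finV] by simp

lemma finite_SS: "finite (SS x k n)"
  by (rule finite_subset[OF _ finite_lists_V[of "Suc n"]]) (auto simp: SS_def)

definition h :: "nat \<Rightarrow> real" where
  "h m = (\<Sum>p\<in>SS i b m. bbrw_prob E (p @ [b]))"

definition Q :: "nat \<Rightarrow> 'a list set" where
  "Q k = {q. length q = k \<and> set q \<subseteq> V \<and> c \<notin> set q}"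

lemma finite_Q: "finite (Q k)"
  by (rule finite_subset[OF _ finite_lists_V[of k]]) (auto simp: Q_def)

lemma h_nonneg: "h m \<ge> 0"
  unfolding h_def by (intro sum_nonneg bbrw_prob_nonneg)

lemma SS_ne: "p \<in> SS x k m \<Longrightarrow> p \<noteq> []"
  by (auto simp: SS_def)

lemma tele: "surv V E i b m = surv V E i b (Suc m) + h m"
proof -
  have img: "SS i b (Suc m) = (\<lambda>(p,z). p @ [z]) ` (SS i b m \<times> (V - {b}))"
  proof (intro equalityI subsetI)
    fix xs assume xs: "xs \<in> SS i b (Suc m)"
    then have ne: "xs \<noteq> []" "butlast xs \<noteq> []" by (auto simp: SS_def) (metis Suc_length_conv length_butlast list.size(3) nat.distinct(1) diff_Suc_1)
    have "hd (butlast xs) = hd xs" using ne by (metis append_butlast_last_id hd_append2)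
    then have "butlast xs \<in> SS i b m" "last xs \<in> V - {b}"
      using xs ne by (auto simp: SS_def dest: in_set_butlastD)
    then show "xs \<in> (\<lambda>(p,z). p @ [z]) ` (SS i b m \<times> (V - {b}))"
      using ne by (intro image_eqI[where x="(butlast xs, last xs)"]) auto
  next
    fix xs assume "xs \<in> (\<lambda>(p,z). p @ [z]) ` (SS i b m \<times> (V - {b}))"
    then obtain p z where "xs = p @ [z]" "p \<in> SS i b m" "z \<in> V - {b}" by auto
    then show "xs \<in> SS i b (Suc m)" using SS_ne[of p] by (auto simp: SS_def)
  qed
  have inj: "inj_on (\<lambda>(p,z). p @ [z]) (SS i b m \<times> (V - {b}))"
    by (auto simp: inj_on_def)
  have "surv V E i b m = (\<Sum>p\<in>SS i b m. \<Sum>z\<in>V. bbrw_prob E (p @ [z]))"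
    unfolding surv_SS
    by (intro sum.cong refl bbrw_stoch[symmetric] finV inV) (auto simp: SS_def nb)
  also have "\<dots> = (\<Sum>p\<in>SS i b m. bbrw_prob E (p @ [b]) + (\<Sum>z\<in>V - {b}. bbrw_prob E (p @ [z])))"
    using bV finV by (intro sum.cong refl sum.remove)
  also have "\<dots> = h m + (\<Sum>p\<in>SS i b m. \<Sum>z\<in>V - {b}. bbrw_prob E (p @ [z]))"
    by (simp add: h_def sum.distrib)
  also have "(\<Sum>p\<in>SS i b m. \<Sum>z\<in>V - {b}. bbrw_prob E (p @ [z])) = (\<Sum>(p,z)\<in>SS i b m \<times> (V - {b}). bbrw_prob E (p @ [z]))"
    by (rule sum.cartesian_product)
  also have "\<dots> = surv V E i b (Suc m)"
    unfolding surv_SS img by (subst sum.reindex[OF inj]) (simp add: case_prod_unfold)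
  finally show ?thesis by simp
qed

lemma W_zero_c: "p \<in> SS i b m \<Longrightarrow> c \<in> set p \<Longrightarrow> bbrw_prob E (p @ [b]) = 0"
proof (rule ccontr)
  assume p: "p \<in> SS i b m" "c \<in> set p" and "bbrw_prob E (p @ [b]) \<noteq> 0"
  then have "is_walk E (p @ [b])" using bbrw_walk[of E, OF sym] by blast
  then have "is_walk E p" by (simp add: is_walk_append)
  then show False using G1[of p] p SS_ne[of p] by (auto simp: SS_def)
qed

lemma factor: assumes p: "p \<in> SS i b m"
  shows "bbrw_prob E (p @ b # q) = bbrw_prob E (p @ [b]) * traj_weight E (a # b # q)"
proof (cases "bbrw_prob E (p @ [b]) = 0")
  case True then show ?thesis using bbrw_split[OF SS_ne[OF p], of E b q] by simp
next
  case False
  then have "is_walk E (p @ [b])" using bbrw_walk[of E, OF sym] by blast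
  then have "is_walk E p" "E (last p) b" using SS_ne[OF p] by (auto simp: is_walk_append)
  then have "last p = a" using G2[of p] p SS_ne[OF p] by (auto simp: SS_def)
  then show ?thesis using bbrw_split[OF SS_ne[OF p], of E b q] by simp
qed

lemma edge_Suc: "surv_edge V E a b c (Suc k) = (\<Sum>q\<in>Q k. traj_weight E (a # b # q))"
proof -
  have img: "{xs. length xs = Suc (Suc k) \<and> set xs \<subseteq> V \<and> hd xs = a
        \<and> (2 \<le> length xs \<longrightarrow> xs ! 1 = b) \<and> c \<notin> set xs} = (\<lambda>q. a # b # q) ` Q k"
  proof (intro equalityI subsetI)
    fix xs assume xs: "xs \<in> {xs. length xs = Suc (Suc k) \<and> set xs \<subseteq> V \<and> hd xs = a
        \<and> (2 \<le> length xs \<longrightarrow> xs ! 1 = b) \<and> c \<notin> set xs}"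
    then obtain x y r where xyr: "xs = x # y # r" by (cases xs rule: remdups_adj.cases) auto
    then show "xs \<in> (\<lambda>q. a # b # q) ` Q k" using xs by (auto simp: Q_def)
  next
    fix xs assume "xs \<in> (\<lambda>q. a # b # q) ` Q k"
    then show "xs \<in> {xs. length xs = Suc (Suc k) \<and> set xs \<subseteq> V \<and> hd xs = a
        \<and> (2 \<le> length xs \<longrightarrow> xs ! 1 = b) \<and> c \<notin> set xs}"
      using aV bV ac bc by (auto simp: Q_def)
  qed
  show ?thesis unfolding surv_edge_def img
    by (subst sum.reindex) (auto simp: inj_on_def)
qed

lemma edge_0: "surv_edge V E a b c 0 = 1"
proof -
  have "{xs. length xs = Suc 0 \<and> set xs \<subseteq> V \<and> hd xs = a
        \<and> (2 \<le> length xs \<longrightarrow> xs ! 1 = b) \<and> c \<notin> set xs} = {[a]}"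
    using aV ac by (auto simp: length_Suc_conv)
  then show ?thesis unfolding surv_edge_def by simp
qed

lemma surv0: "surv V E i b 0 = 1"
proof -
  have "SS i b 0 = {[i]}" using iV ib by (auto simp: SS_def length_Suc_conv)
  then show ?thesis unfolding surv_SS by (simp add: bbrw_prob_def)
qed

lemma h_restrict: "h m = (\<Sum>p\<in>{p \<in> SS i b m. c \<notin> set p}. bbrw_prob E (p @ [b]))"
  unfolding h_def
  by (rule sum.mono_neutral_right[OF finite_SS]) (auto intro: W_zero_c)

definition gg :: "'a list \<Rightarrow> nat" where "gg xs = length (takeWhile (\<lambda>x. x \<noteq> b) xs) - 1"

lemma part1: "sum (bbrw_prob E) (SS i c n \<inter> {xs. b \<notin> set xs}) = surv V E i b n"
  unfolding surv_SS
proof (rule sum.mono_neutral_left[OF finite_SS])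
  show "SS i c n \<inter> {xs. b \<notin> set xs} \<subseteq> SS i b n" by (auto simp: SS_def)
  show "\<forall>x\<in>SS i b n - SS i c n \<inter> {xs. b \<notin> set xs}. bbrw_prob E x = 0"
  proof (intro ballI, rule ccontr)
    fix x assume x: "x \<in> SS i b n - SS i c n \<inter> {xs. b \<notin> set xs}" and "bbrw_prob E x \<noteq> 0"
    then have "is_walk E x" using bbrw_walk[of E, OF sym] by blast
    have x1: "x \<in> SS i b n" using x by auto
    have props: "hd x = i" "b \<notin> set x" "x \<noteq> []" using x1 unfolding SS_def by auto
    have x2: "x \<notin> SS i c n" using x props by auto
    have "c \<in> set x" using x1 x2 unfolding SS_def by auto
    then show False using G1[OF \<open>is_walk E x\<close> props(3,1,2)] by blast
  qed
qed

lemma main_n: "surv V E i c n = surv V E i b n + (\<Sum>m<n. h m * surv_edge V E a b c (n - m))"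
proof -
  define A where "A = SS i c n"
  define B where "B = A - {xs. b \<notin> set xs}"
  define g where "g xs = length (takeWhile (\<lambda>x. x \<noteq> b) xs) - 1" for xs
  have finA: "finite A" unfolding A_def by (rule finite_SS)
  have "surv V E i c n = sum (bbrw_prob E) (A \<inter> {xs. b \<notin> set xs}) + sum (bbrw_prob E) B"
    unfolding surv_SS A_def[symmetric] B_def by (rule sum.Int_Diff[OF finA])
  moreover have "sum (bbrw_prob E) (A \<inter> {xs. b \<notin> set xs}) = surv V E i b n"
    unfolding A_def by (rule part1)
  moreover have "sum (bbrw_prob E) B = (\<Sum>m<n. h m * surv_edge V E a b c (n - m))"
  proof -
    have finB: "finite B" using finA B_def by simp
    have gB: "g ` B \<subseteq> {..<n}"
    proof
      fix y assume "y \<in> g ` B"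
      then obtain xs where xs: "xs \<in> B" "y = g xs" by auto
      then have "b \<in> set xs" by (auto simp: B_def)
      then obtain p q where pq: "xs = p @ b # q" "b \<notin> set p" using split_list_first by metis
      have "length xs = Suc n" "hd xs = i" using xs by (auto simp: B_def A_def SS_def)
      moreover have "p \<noteq> []" using pq calculation ib by auto
      ultimately show "y \<in> {..<n}" using xs(2) pq by (cases p) (auto simp: g_def takeWhile_split)
    qed
    have fib: "{xs \<in> B. g xs = m} = (\<lambda>(p,q). p @ b # q) ` ({p \<in> SS i b m. c \<notin> set p} \<times> Q (n - Suc m))"
      if m: "m < n" for m
    proof (intro equalityI subsetI)
      fix xs assume xs: "xs \<in> {xs \<in> B. g xs = m}"
      then have "b \<in> set xs" by (auto simp: B_def)
      then obtain p q where pq: "xs = p @ b # q" "b \<notin> set p" using split_list_first by metis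
      have xsA: "length xs = Suc n" "set xs \<subseteq> V" "hd xs = i" "c \<notin> set xs"
        using xs by (auto simp: B_def A_def SS_def)
      have "p \<noteq> []" using pq xsA ib by auto
      then have lp: "length p = Suc m" using xs pq by (auto simp: g_def takeWhile_split)
      have "p \<in> {p \<in> SS i b m. c \<notin> set p}"
        using lp pq xsA \<open>p \<noteq> []\<close> by (auto simp: SS_def)
      moreover have "q \<in> Q (n - Suc m)" using lp pq xsA by (auto simp: Q_def)
      ultimately show "xs \<in> (\<lambda>(p,q). p @ b # q) ` ({p \<in> SS i b m. c \<notin> set p} \<times> Q (n - Suc m))"
        using pq by (intro image_eqI[where x="(p,q)"]) auto
    next
      fix xs assume "xs \<in> (\<lambda>(p,q). p @ b # q) ` ({p \<in> SS i b m. c \<notin> set p} \<times> Q (n - Suc m))"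
      then obtain p q where pq: "xs = p @ b # q" "p \<in> SS i b m" "c \<notin> set p" "q \<in> Q (n - Suc m)" by auto
      then have "p \<noteq> []" using SS_ne by blast
      then show "xs \<in> {xs \<in> B. g xs = m}" using pq m bV bc
        by (auto simp: B_def A_def SS_def Q_def g_def takeWhile_split)
    qed
    have inj: "inj_on (\<lambda>(p,q). p @ b # q) ({p \<in> SS i b m. c \<notin> set p} \<times> Q k)" for m k
    proof (rule inj_onI, clarsimp)
      fix p q p' q' assume "p \<in> SS i b m" "p' \<in> SS i b m" and eq: "p @ b # q = p' @ b # q'"
      then have "b \<notin> set p" "b \<notin> set p'" by (auto simp: SS_def)
      then have "p = p'" using eq takeWhile_split by metis
      then show "p = p' \<and> q = q'" using eq by simp
    qed
    have "sum (bbrw_prob E) B = (\<Sum>m<n. sum (bbrw_prob E) {xs \<in> B. g xs = m})"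
      by (rule sum.group[OF finB _ gB, symmetric]) simp
    also have "\<dots> = (\<Sum>m<n. h m * surv_edge V E a b c (n - m))"
    proof (rule sum.cong[OF refl])
      fix m assume "m \<in> {..<n}"
      then have m: "m < n" by simp
      have "sum (bbrw_prob E) {xs \<in> B. g xs = m}
          = (\<Sum>(p,q)\<in>{p \<in> SS i b m. c \<notin> set p} \<times> Q (n - Suc m). bbrw_prob E (p @ b # q))"
        unfolding fib[OF m] by (subst sum.reindex[OF inj]) (simp add: case_prod_unfold)
      also have "\<dots> = (\<Sum>p\<in>{p \<in> SS i b m. c \<notin> set p}. \<Sum>q\<in>Q (n - Suc m). bbrw_prob E (p @ b # q))"
        by (rule sum.cartesian_product[symmetric])
      also have "\<dots> = (\<Sum>p\<in>{p \<in> SS i b m. c \<notin> set p}. \<Sum>q\<in>Q (n - Suc m). bbrw_prob E (p @ [b]) * traj_weight E (a # b # q))"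
        by (intro sum.cong refl factor[of _ m]) simp
      also have "\<dots> = h m * (\<Sum>q\<in>Q (n - Suc m). traj_weight E (a # b # q))"
        by (simp only: h_restrict sum_product)
      also have "\<dots> = h m * surv_edge V E a b c (n - m)"
        using m edge_Suc[of "n - Suc m"] by (simp add: Suc_diff_Suc)
      finally show "sum (bbrw_prob E) {xs \<in> B. g xs = m} = h m * surv_edge V E a b c (n - m)" .
    qed
    finally show ?thesis .
  qed
  ultimately show ?thesis by simp
qed

end



lemma suminf_swap_ennreal:
  fixes f :: "nat \<Rightarrow> nat \<Rightarrow> ennreal"
  shows "(\<Sum>m. \<Sum>n. f m n) = (\<Sum>n. \<Sum>m. f m n)"
proof -
  have "(\<Sum>m. \<Sum>n. f m n) = (\<integral>\<^sup>+m. \<integral>\<^sup>+n. f m n \<partial>count_space UNIV \<partial>count_space UNIV)"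
    by (simp add: nn_integral_count_space_nat)
  also have "\<dots> = (\<integral>\<^sup>+n. \<integral>\<^sup>+m. f m n \<partial>count_space UNIV \<partial>count_space UNIV)"
    by (rule nn_integral_count_space_nn_integral) auto
  also have "\<dots> = (\<Sum>n. \<Sum>m. f m n)"
    by (simp add: nn_integral_count_space_nat)
  finally show ?thesis .
qed

lemma shift_sum_ennreal:
  fixes f :: "nat \<Rightarrow> ennreal"
  shows "(\<Sum>n. if m < n then f (n - m) else 0) = (\<Sum>k. f (Suc k))"
proof -
  have "(\<Sum>n. if m < n then f (n - m) else 0) = (\<Sum>j. (if m < j + Suc m then f (j + Suc m - m) else 0)) + (\<Sum>j<Suc m. (if m < j then f (j - m) else 0))"
    by (rule suminf_offset) (rule summableI)
  also have "(\<Sum>j<Suc m. (if m < j then f (j - m) else 0)) = 0" by simp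
  finally show ?thesis by (simp add: Suc_diff_le)
qed

lemma cauchy_ennreal:
  fixes H F :: "nat \<Rightarrow> ennreal"
  shows "(\<Sum>n. \<Sum>m<n. H m * F (n - m)) = (\<Sum>m. H m) * (\<Sum>k. F (Suc k))"
proof -
  have "(\<Sum>n. \<Sum>m<n. H m * F (n - m)) = (\<Sum>n. \<Sum>m. if m < n then H m * F (n - m) else 0)"
  proof (rule suminf_cong)
    fix n
    have "(\<Sum>m. if m < n then H m * F (n - m) else 0) = (\<Sum>m<n. if m < n then H m * F (n - m) else 0)"
      by (rule suminf_finite) auto
    then show "(\<Sum>m<n. H m * F (n - m)) = (\<Sum>m. if m < n then H m * F (n - m) else 0)" by simp
  qed
  also have "\<dots> = (\<Sum>m. \<Sum>n. if m < n then H m * F (n - m) else 0)"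
    by (rule suminf_swap_ennreal[symmetric])
  also have "\<dots> = (\<Sum>m. H m * (\<Sum>k. F (Suc k)))"
  proof (rule suminf_cong)
    fix m
    have "(\<Sum>n. if m < n then H m * F (n - m) else 0) = (\<Sum>n. H m * (if m < n then F (n - m) else 0))"
      by (intro suminf_cong) auto
    also have "\<dots> = H m * (\<Sum>k. F (Suc k))"
      using shift_sum_ennreal[of m F] by simp
    finally show "(\<Sum>n. if m < n then H m * F (n - m) else 0) = H m * (\<Sum>k. F (Suc k))" .
  qed
  also have "\<dots> = (\<Sum>m. H m) * (\<Sum>k. F (Suc k))" by simp
  finally show ?thesis .
qed

context bbrw_setup begin

lemma surv_nonneg: "surv V E x k n \<ge> 0"
  unfolding surv_def by (intro sum_nonneg bbrw_prob_nonneg)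

lemma surv_edge_nonneg: "surv_edge V E x y k n \<ge> 0"
  unfolding surv_edge_def by (intro sum_nonneg traj_weight_nonneg)

lemma h_partial: "(\<Sum>m<M. h m) = 1 - surv V E i b M"
proof (induction M)
  case 0 then show ?case by (simp add: surv0)
next
  case (Suc M) then show ?case using tele[of M] by simp
qed

lemma access_step:
  "access_time V E i c = access_time V E i b + (access_time_edge V E a b c - 1)"
proof -
  let ?sb = "\<lambda>n. surv V E i b n"
  let ?e = "\<lambda>k. surv_edge V E a b c k"
  let ?H = "\<lambda>m. ennreal (h m)"
  let ?F = "\<lambda>k. ennreal (?e k)"
  have "access_time V E i c = (\<Sum>n. ennreal (?sb n) + (\<Sum>m<n. ?H m * ?F (n - m)))"
    unfolding access_time_def
  proof (rule suminf_cong)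
    fix n
    have "ennreal (surv V E i c n) = ennreal (?sb n + (\<Sum>m<n. h m * ?e (n - m)))"
      by (simp add: main_n)
    also have "\<dots> = ennreal (?sb n) + ennreal (\<Sum>m<n. h m * ?e (n - m))"
      by (intro ennreal_plus surv_nonneg sum_nonneg mult_nonneg_nonneg h_nonneg surv_edge_nonneg)
    also have "ennreal (\<Sum>m<n. h m * ?e (n - m)) = (\<Sum>m<n. ennreal (h m * ?e (n - m)))"
      by (rule sum_ennreal[symmetric]) (intro mult_nonneg_nonneg h_nonneg surv_edge_nonneg)
    also have "\<dots> = (\<Sum>m<n. ?H m * ?F (n - m))"
      by (intro sum.cong refl ennreal_mult h_nonneg surv_edge_nonneg)
    finally show "ennreal (surv V E i c n) = ennreal (?sb n) + (\<Sum>m<n. ?H m * ?F (n - m))" .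
  qed
  also have "\<dots> = access_time V E i b + (\<Sum>n. \<Sum>m<n. ?H m * ?F (n - m))"
    unfolding access_time_def by (rule suminf_add[symmetric]) (rule summableI)+
  also have "(\<Sum>n. \<Sum>m<n. ?H m * ?F (n - m)) = (\<Sum>m. ?H m) * (\<Sum>k. ?F (Suc k))"
    by (rule cauchy_ennreal)
  also have "(\<Sum>k. ?F (Suc k)) = access_time_edge V E a b c - 1"
  proof -
    have "access_time_edge V E a b c = (\<Sum>j. ?F (j + Suc 0)) + (\<Sum>j<Suc 0. ?F j)"
      unfolding access_time_edge_def by (rule suminf_offset) (rule summableI)
    then have "access_time_edge V E a b c = (\<Sum>k. ?F (Suc k)) + 1"
      by (simp add: edge_0)
    then show ?thesis by simp
  qed
  finally have eq: "access_time V E i c = access_time V E i b + (\<Sum>m. ?H m) * (access_time_edge V E a b c - 1)" .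
  show ?thesis
  proof (cases "access_time V E i b = \<infinity>")
    case True
    then show ?thesis using eq by simp
  next
    case False
    then have summ: "summable ?sb" unfolding access_time_def
      by (intro summable_suminf_not_top surv_nonneg) simp
    then have "?sb \<longlonglongrightarrow> 0" by (rule summable_LIMSEQ_zero)
    then have "(\<lambda>M. 1 - ?sb M) \<longlonglongrightarrow> 1 - 0" by (intro tendsto_intros)
    then have "h sums 1" unfolding sums_def h_partial by simp
    then have hs: "summable h" "suminf h = 1" by (simp_all add: sums_iff)
    have one: "(\<Sum>m. ?H m) = 1"
      using suminf_ennreal2[of h, OF h_nonneg hs(1)] hs(2) by simp
    show ?thesis using eq unfolding one by (simp only: mult_1)
  qed
qed

end



lemma walk_map_upt:
  assumes "\<And>n. lo \<le> n \<Longrightarrow> Suc n < hi \<Longrightarrow> E (v n) (v (Suc n))"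
  shows "is_walk E (map v [lo..<hi])"
  unfolding is_walk_def using assms by (auto simp: nth_map nth_upt)

lemma one_step:
  fixes V :: "'a set" and E :: "'a \<Rightarrow> 'a \<Rightarrow> bool" and v :: "nat \<Rightarrow> 'a" and N :: nat
  assumes tree: "finite_tree V E"
    and N1: "N \<ge> 1"
    and vV: "\<forall>n\<le>Suc N. v n \<in> V"
    and vE: "\<forall>n<Suc N. E (v n) (v (Suc n))"
    and inj: "inj_on v {0..Suc N}"
  shows "access_time V E (v 0) (v (Suc N))
         = access_time V E (v 0) (v N) + (access_time_edge V E (v (N - 1)) (v N) (v (Suc N)) - 1)"
proof -
  have finV: "finite V" and inV: "\<And>u w. E u w \<Longrightarrow> u \<in> V \<and> w \<in> V"
    and symE: "\<And>u w. E u w \<Longrightarrow> E w u" and acyc: "\<nexists>xs. is_cycle E xs"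
    using tree unfolding finite_tree_def by blast+
  have vinj: "v x = v y \<longleftrightarrow> x = y" if "x \<le> Suc N" "y \<le> Suc N" for x y
    using inj that by (auto simp: inj_on_def)
  have Ev: "E (v n) (v (Suc n))" if "n \<le> N" for n using vE that by auto
  let ?i = "v 0" and ?a = "v (N - 1)" and ?b = "v N" and ?c = "v (Suc N)"
  interpret bbrw_setup V E ?i ?a ?b ?c
  proof
    show "finite V" by (rule finV)
    show "\<And>u w. E u w \<Longrightarrow> u \<in> V \<and> w \<in> V" by (rule inV)
    show "\<And>u w. E u w \<Longrightarrow> E w u" by (rule symE)
    show "v 0 \<in> V" "v (Suc N) \<in> V" using vV by auto
    show "E (v (N - 1)) (v N)" using Ev[of "N - 1"] N1 by simp
    show "nbrs E (v 0) \<noteq> {}" using Ev[of 0] by (auto simp: nbrs_def)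
    show "v 0 \<noteq> v N" "v 0 \<noteq> v (Suc N)" "v N \<noteq> v (Suc N)" "v (N - 1) \<noteq> v (Suc N)"
      using N1 by (simp_all add: vinj)
  next
    fix q assume q: "is_walk E q" "q \<noteq> []" "hd q = v 0" "v N \<notin> set q"
    show "v (Suc N) \<notin> set q"
    proof
      assume cq: "v (Suc N) \<in> set q"
      let ?p = "map v [0..<Suc (Suc N)]"
      have "inj_on v {0..<Suc (Suc N)}" by (rule inj_on_subset[OF inj]) auto
      then have "distinct ?p" by (simp only: distinct_map set_upt distinct_upt)
      moreover have "is_walk E ?p" by (rule walk_map_upt) (simp add: Ev)
      moreover have "?p \<noteq> []" by simp
      moreover have "hd ?p = hd q" using q by (simp add: hd_map del: upt_Suc)
      moreover have "last ?p \<in> set q" using cq by (simp add: last_map del: upt_Suc)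
      ultimately have "set ?p \<subseteq> set q" using path_in_walk[OF symE acyc] q by blast
      moreover have "v N \<in> set ?p" by auto
      ultimately show False using q by auto
    qed
  next
    fix q assume q: "is_walk E q" "q \<noteq> []" "hd q = v 0" "v N \<notin> set q" and Eb: "E (last q) (v N)"
    show "last q = v (N - 1)"
    proof (rule ccontr)
      assume ne: "last q \<noteq> v (N - 1)"
      define w where "w = last q"
      have wq: "w \<in> set q" using q w_def by simp
      show False
      proof (cases "w \<in> v ` {0..N}")
        case True
        then obtain j where j: "j \<le> N" "w = v j" by auto
        have "j \<noteq> N" using wq j q by auto
        moreover have "j \<noteq> N - 1" using ne j w_def by auto
        ultimately have jN: "Suc j < N" using j by linarith
        let ?p = "map v [Suc j..<Suc N] @ [v j]"
        have "inj_on v {Suc j..<N}" by (rule inj_on_subset[OF inj]) auto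
        then have "distinct ?p" using inj jN
          by (auto simp: distinct_map vinj inj_on_subset[OF inj] atLeastLessThanSuc_atLeastAtMost)
        moreover have "is_walk E ?p"
        proof -
          have "is_walk E (map v [Suc j..<Suc N])" by (rule walk_map_upt) (simp add: Ev)
          moreover have "E (last (map v [Suc j..<Suc N])) (v j)"
            using Eb j w_def jN symE by (simp add: last_map)
          ultimately show ?thesis using jN by (simp add: is_walk_append)
        qed
        moreover have "?p \<noteq> []" by simp
        moreover have "is_walk E [v (Suc j), v j]" using Ev[of j] jN symE by simp
        moreover have "hd ?p = hd [v (Suc j), v j]" using jN by (simp add: hd_map upt_conv_Cons)
        moreover have "last ?p \<in> set [v (Suc j), v j]" by simp
        ultimately have "set ?p \<subseteq> set [v (Suc j), v j]" using path_in_walk[OF symE acyc] by blast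
        moreover have "v N \<in> set ?p" using jN by auto
        moreover have "v N \<noteq> v (Suc j)" "v N \<noteq> v j" using jN by (simp_all add: vinj)
        ultimately show False by auto
      next
        case False
        let ?p = "w # rev (map v [0..<Suc N])"
        have "inj_on v {0..<Suc N}" by (rule inj_on_subset[OF inj]) auto
        then have "distinct (map v [0..<Suc N])" by (simp only: distinct_map set_upt distinct_upt)
        moreover have "w \<notin> set (map v [0..<Suc N])" using False by (auto simp del: upt_Suc)
        ultimately have "distinct ?p" by simp
        moreover have "is_walk E ?p"
        proof -
          have "is_walk E (map v [0..<Suc N])" by (rule walk_map_upt) (simp add: Ev)
          then have "is_walk E (rev (map v [0..<Suc N]))" using is_walk_rev[of E] symE by blast
          moreover have "hd (rev (map v [0..<Suc N])) = v N" by (simp add: hd_rev last_map)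
          ultimately show ?thesis using Eb w_def by (simp add: is_walk_Cons)
        qed
        moreover have "?p \<noteq> []" by simp
        moreover have "is_walk E (rev q)" using q(1) is_walk_rev[of E] symE by blast
        moreover have "rev q \<noteq> []" using q by simp
        moreover have "hd ?p = hd (rev q)" using w_def q by (simp add: hd_rev)
        moreover have "last ?p \<in> set (rev q)" using q by (simp add: last_rev hd_map)
           (metis hd_in_set)
        ultimately have "set ?p \<subseteq> set (rev q)" using path_in_walk[OF symE acyc] by blast
        moreover have "v N \<in> set ?p" by auto
        ultimately show False using q by auto
      qed
    qed
  qed
  show ?thesis by (rule access_step)
qed

theorem lemma4:
  fixes V :: "'a set" and E :: "'a \<Rightarrow> 'a \<Rightarrow> bool" and v :: "nat \<Rightarrow> 'a" and N :: nat
  assumes "finite_tree V E"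
    and "N \<ge> 1"
    and "\<forall>n\<le>N. v n \<in> V"
    and "\<forall>n<N. E (v n) (v (Suc n))"
    and "inj_on v {0..N}"
  shows "access_time V E (v 0) (v N)
         = access_time V E (v 0) (v 1)
           + (\<Sum>n=1..N-1. access_time_edge V E (v (n - 1)) (v n) (v (Suc n)) - 1)"
  using assms(2-5)
proof (induction N rule: nat_induct_at_least)
  case base
  then show ?case by simp
next
  case (Suc N)
  have IH: "access_time V E (v 0) (v N)
         = access_time V E (v 0) (v 1)
           + (\<Sum>n=1..N-1. access_time_edge V E (v (n - 1)) (v n) (v (Suc n)) - 1)"
    using Suc.prems Suc.hyps by (intro Suc.IH) (auto intro: inj_on_subset)
  have step: "access_time V E (v 0) (v (Suc N))
         = access_time V E (v 0) (v N) + (access_time_edge V E (v (N - 1)) (v N) (v (Suc N)) - 1)"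
    using one_step[OF assms(1) Suc.hyps] Suc.prems by blast
  obtain M where M: "N = Suc M" using Suc.hyps by (cases N) auto
  have sum: "(\<Sum>n=1..Suc N - 1. access_time_edge V E (v (n - 1)) (v n) (v (Suc n)) - 1)
      = (\<Sum>n=1..N-1. access_time_edge V E (v (n - 1)) (v n) (v (Suc n)) - 1)
        + (access_time_edge V E (v (N - 1)) (v N) (v (Suc N)) - 1)"
    unfolding M by (simp add: sum.cl_ivl_Suc)
  show ?case unfolding sum step IH by (simp add: add.assoc)
qed


end
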